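(* Let $n$ be a natural number, $P$ a polytope, and $f\in\operatorname{vert}(P,\triangle_n)$. Then there exists a face $G\subset\triangle_n$ such that $\dim f(P)=\dim G$, $f(P)\subset G$, and every facet of $G$ contains a facet of $f(P)$.
   Context: For convex polytopes $P,Q$, $\operatorname{Hom}(P,Q)$ is the set of maps $P\to Q$ that are restrictions of affine maps $\operatorname{Aff}(P)\to\operatorname{Aff}(Q)$; it is a convex polytope in the affine space of affine maps $\operatorname{Aff}(P)\to\operatorname{Aff}(Q)$, and $\operatorname{vert}(P,Q)$ denotes its set of vertices. $\triangle_n=\operatorname{conv}(0,e_1,\ldots,e_n)\subset\mathbb{R}^n$. A facet of a polytope is a face of codimension one in it. *)

theory Defs
  imports "HOL-Analysis.Analysis"
begin

definition std_simplex :: "(real ^ 'n) set" where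
  "std_simplex = convex hull (insert 0 {axis i 1 | i. True})"

text \<open>A map is represented extensionally: as a function which is 0 outside P
  (so that a map on P corresponds to exactly one HOL function).
  Affine maps Aff(P) -> Aff(Q) are exactly restrictions of affine maps of the
  ambient spaces, i.e. x |-> h x + c with h linear.\<close>
definition Hom :: "'a::euclidean_space set \<Rightarrow> 'b::euclidean_space set \<Rightarrow> ('a \<Rightarrow> 'b) set" where
  "Hom P Q = {f. (\<forall>x\<in>P. f x \<in> Q) \<and>
                 (\<exists>h c. linear h \<and> (\<forall>x\<in>P. f x = h x + c)) \<and>
                 (\<forall>x. x \<notin> P \<longrightarrow> f x = 0)}"

definition vert :: "'a::euclidean_space set \<Rightarrow> 'b::euclidean_space set \<Rightarrow> ('a \<Rightarrow> 'b) set" where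
  "vert P Q = {f \<in> Hom P Q. \<forall>g\<in>Hom P Q. \<forall>h\<in>Hom P Q. \<forall>u::real.
                 0 < u \<and> u < 1 \<and> f = (\<lambda>x. u *\<^sub>R g x + (1 - u) *\<^sub>R h x) \<longrightarrow> g = h}"

end

theory Submission
  imports Defs
begin


definition vtx :: "'n option \<Rightarrow> real^'n" where
  "vtx i = (case i of None \<Rightarrow> 0 | Some k \<Rightarrow> axis k 1)"
definition wv :: "'n::finite option \<Rightarrow> real^'n" where
  "wv i = (case i of None \<Rightarrow> - (\<Sum>k\<in>UNIV. axis k 1) | Some k \<Rightarrow> axis k 1)"
definition bv :: "'n option \<Rightarrow> real" where
  "bv i = (case i of None \<Rightarrow> 1 | Some k \<Rightarrow> 0)"

lemma wv_None: "wv None \<bullet> (y::real^'n::finite) = - (\<Sum>k\<in>UNIV. y$k)"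
  by (simp add: wv_def inner_sum_left inner_axis')
lemma wv_Some: "wv (Some k) \<bullet> (y::real^'n::finite) = y$k"
  by (simp add: wv_def inner_axis')
lemma bv_simps[simp]: "bv None = 1" "bv (Some k) = 0" by (auto simp: bv_def)
lemma vtx_simps[simp]: "vtx None = 0" "vtx (Some k) = axis k 1" by (auto simp: vtx_def)

lemma sum_option: "(\<Sum>i\<in>(UNIV::'n::finite option set). g i) = g None + (\<Sum>k\<in>UNIV. g (Some k))"
proof -
  have "(UNIV::'n option set) = insert None (range Some)" by (rule UNIV_option_conv)
  then have "sum g UNIV = sum g (insert None (range Some))" by simp
  also have "\<dots> = g None + sum g (range Some)" by (subst sum.insert) auto
  finally show ?thesis by (simp add: sum.reindex)
qed

lemma Basis_axis: "(Basis :: (real^'n) set) = {axis i 1 | i. True}"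
  by (auto simp: Basis_vec_def)

lemma vtx_range: "range (vtx :: 'n option \<Rightarrow> real^'n) = insert 0 {axis i 1 | i. True}"
  apply (auto simp: vtx_def split: option.splits)
  by (metis option.simps(5) rangeI)

lemma inj_vtx: "inj (vtx :: 'n option \<Rightarrow> real^'n)"
  unfolding inj_def vtx_def
  by (auto split: option.splits simp: axis_eq_axis)

lemma simplex_char: "(std_simplex :: (real^'n::finite) set) = {y. \<forall>i. 0 \<le> wv i \<bullet> y + bv i}"
proof -
  have s: "(\<Sum>i\<in>Basis. (y::real^'n) \<bullet> i) = (\<Sum>k\<in>UNIV. y$k)" for y
  proof -
    have "(Basis :: (real^'n) set) = (\<lambda>k. axis k 1) ` UNIV" by (auto simp: Basis_axis)
    moreover have "inj (\<lambda>k. axis k (1::real) :: real^'n)" by (auto simp: inj_def axis_eq_axis)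
    moreover have "inj (\<lambda>k. axis k (1::real) :: real^'n)" by (auto simp: inj_def axis_eq_axis)
    ultimately have "sum ((\<bullet>) y) Basis = sum (((\<bullet>) y) \<circ> (\<lambda>k. axis k 1)) UNIV"
      by (metis sum.reindex)
    then show ?thesis by (simp add: inner_axis o_def)
  qed
  show ?thesis
    unfolding std_simplex_def Basis_axis[symmetric] std_simplex set_eq_iff mem_Collect_eq s
    apply (auto simp: Basis_axis inner_axis wv_None wv_Some)
    subgoal for x i apply (cases i) apply (auto simp: wv_None wv_Some)
      subgoal for a by (drule spec[of _ "axis a 1"]) (auto simp add: inner_axis) done
    subgoal for x k by (drule spec[of _ "Some k"]) (simp add: wv_Some)
    subgoal for x by (drule spec[of _ None]) (simp add: wv_None)
    done
qed

lemma bary_sum: "(\<Sum>i\<in>UNIV. wv i \<bullet> (y::real^'n::finite) + bv i) = 1"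
  by (simp add: sum_option wv_None wv_Some)

lemma bary_vec: "(\<Sum>i\<in>UNIV. (wv i \<bullet> (y::real^'n::finite) + bv i) *\<^sub>R vtx i) = y"
  by (simp add: sum_option wv_None wv_Some vec_eq_iff sum_component axis_def if_distrib sum.delta cong: if_cong)

lemma bary_vtx: "wv l \<bullet> vtx i + bv l = (if l = i then 1 else (0::real))"
  by (cases l; cases i) (auto simp: wv_None wv_Some axis_def sum.delta)

lemma bary_comb: "wv l \<bullet> (u *\<^sub>R x + v *\<^sub>R y) + bv l = u * (wv l \<bullet> x + bv l) + v * (wv l \<bullet> y + bv l)"
  if "u + v = 1" for x y :: "real^'n::finite"
proof -
  have "bv l = (u+v) * bv l" using that by simp
  then show ?thesis by (simp add: inner_add_right algebra_simps)
qed

lemma in_hull: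
  fixes y :: "real^'n::finite"
  assumes "\<forall>i. 0 \<le> wv i \<bullet> y + bv i" "\<forall>i. i \<notin> T \<longrightarrow> wv i \<bullet> y + bv i = 0"
  shows "y \<in> convex hull (vtx ` T)"
proof -
  have "(\<Sum>i\<in>T. (wv i \<bullet> y + bv i) *\<^sub>R vtx i) = (\<Sum>i\<in>UNIV. (wv i \<bullet> y + bv i) *\<^sub>R vtx i)"
    by (rule sum.mono_neutral_left) (use assms in auto)
  also have "\<dots> = y" by (rule bary_vec)
  finally have e: "(\<Sum>i\<in>T. (wv i \<bullet> y + bv i) *\<^sub>R vtx i) = y" .
  have "(\<Sum>i\<in>T. (wv i \<bullet> y + bv i)) = (\<Sum>i\<in>UNIV. (wv i \<bullet> y + bv i))"
    by (rule sum.mono_neutral_left) (use assms in auto)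
  also have "\<dots> = 1" by (rule bary_sum)
  finally have s: "(\<Sum>i\<in>T. (wv i \<bullet> y + bv i)) = 1" .
  have "(\<Sum>i\<in>T. (wv i \<bullet> y + bv i) *\<^sub>R vtx i) \<in> convex hull (vtx ` T)"
    by (rule convex_sum) (use assms s in \<open>auto intro: hull_inc\<close>)
  then show ?thesis using e by simp
qed

lemma hull_sub:
  "convex hull (vtx ` T) \<subseteq> {y::real^'n::finite. (\<forall>i. 0 \<le> wv i \<bullet> y + bv i) \<and> (\<forall>i. i \<notin> T \<longrightarrow> wv i \<bullet> y + bv i = 0)}"
proof (rule hull_minimal)
  show "vtx ` T \<subseteq> {y::real^'n::finite. (\<forall>i. 0 \<le> wv i \<bullet> y + bv i) \<and> (\<forall>i. i \<notin> T \<longrightarrow> wv i \<bullet> y + bv i = 0)}" by (auto simp: bary_vtx)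
  show "convex {y::real^'n::finite. (\<forall>i. 0 \<le> wv i \<bullet> y + bv i) \<and> (\<forall>i. i \<notin> T \<longrightarrow> wv i \<bullet> y + bv i = 0)}"
    unfolding convex_def by (auto simp: bary_comb)
qed

lemma vtx_indep: "\<not> affine_dependent (vtx ` T :: (real^'n::finite) set)"
proof -
  have "\<not> affine_dependent (insert 0 (Basis :: (real^'n) set))"
    using affine_dependent_iff_dependent[of 0 "Basis :: (real^'n) set"] independent_Basis
    by (simp add: zero_not_in_Basis)
  moreover have "vtx ` T \<subseteq> insert 0 Basis" using vtx_range Basis_axis by blast
  ultimately show ?thesis using affine_independent_subset by blast
qed

lemma aff_dim_vtx: "aff_dim (vtx ` T :: (real^'n::finite) set) = int (card T) - 1"
  using aff_dim_affine_independent[OF vtx_indep[of T]] card_image[OF inj_on_subset[OF inj_vtx, of T]]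
  by simp

lemma sep:
  fixes Z :: "'a::euclidean_space set"
  assumes "v \<notin> affine hull Z"
  shows "\<exists>w b. (\<forall>y\<in>Z. w \<bullet> y + b = 0) \<and> w \<bullet> v + b \<noteq> 0"
proof (cases "Z = {}")
  case True then show ?thesis by (rule_tac x=0 in exI, rule_tac x=1 in exI) simp
next
  case False
  then obtain q where q: "q \<in> Z" by blast
  let ?W = "span ((\<lambda>x. -q + x) ` (Z-{q}))"
  have ah: "affine hull Z = (\<lambda>x. q+x) ` ?W" by (rule affine_hull_span2[OF q])
  obtain y' z where y': "y' \<in> ?W" and oz: "\<And>w. w \<in> ?W \<Longrightarrow> orthogonal z w" and e: "v - q = y' + z"
    using orthogonal_subspace_decomp_exists[of ?W "v - q"] by (metis span_span)
  have "z \<noteq> 0"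
  proof
    assume "z = 0"
    then have "v = q + y'" using e by (simp add: algebra_simps)
    then show False using assms y' ah by auto
  qed
  have "z \<bullet> (y - q) = 0" if "y \<in> Z" for y
  proof -
    have "y - q \<in> ?W"
    proof (cases "y = q")
      case True then show ?thesis by (simp add: span_zero)
    next
      case False
      then have "y - q \<in> (\<lambda>x. -q + x) ` (Z-{q})" using that by (auto intro!: image_eqI[where x=y])
      then show ?thesis by (rule span_base)
    qed
    then show ?thesis using oz orthogonal_def by blast
  qed
  moreover have "z \<bullet> (v - q) \<noteq> 0"
    using e oz[OF y'] \<open>z \<noteq> 0\<close> by (simp add: inner_add_right orthogonal_def)
  ultimately show ?thesis
    by (rule_tac x=z in exI, rule_tac x="-(z \<bullet> q)" in exI) (auto simp: inner_diff_right)
qed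

lemma half_aux: "(1/2) *\<^sub>R (a + t *\<^sub>R b) + (1 - 1/2) *\<^sub>R (a + (-t) *\<^sub>R b) = (a::'b::real_vector)"
proof -
  have h: "(1/2) *\<^sub>R a + (1/2) *\<^sub>R a = a"
    by (metis scaleR_add_left scaleR_one field_sum_of_halves)
  have o: "(1 - 1/2::real) = 1/2" by simp
  have "(1/2) *\<^sub>R (a + t *\<^sub>R b) + (1/2) *\<^sub>R (a + - (t *\<^sub>R b)) = ((1/2) *\<^sub>R a + (1/2) *\<^sub>R a) + ((1/2) *\<^sub>R (t *\<^sub>R b) + - ((1/2) *\<^sub>R (t *\<^sub>R b)))"
    by (simp only: scaleR_add_right scaleR_minus_right) (simp only: add_ac)
  then show ?thesis using h by (simp only: o scaleR_minus_left) simp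
qed

lemma cancel_aux: fixes w :: "'b::real_vector" assumes "y + e *\<^sub>R w = y + (-e) *\<^sub>R w" "0 < e" shows "w = 0"
proof -
  have "e *\<^sub>R w + e *\<^sub>R w = 0" using assms(1) by (simp add: eq_neg_iff_add_eq_0)
  then have "(e + e) *\<^sub>R w = 0" by (metis scaleR_add_left)
  then show ?thesis using assms(2) by simp
qed

lemma perturb:
  fixes f :: "'a::euclidean_space \<Rightarrow> real^'n::finite" and h :: "'a \<Rightarrow> real^'n"
  assumes fv: "f \<in> vert P std_simplex"
  and hl: "linear h" and fA: "\<forall>x\<in>P. f x = h x + c"
  and PV: "P = convex hull V" "finite V"
  and cond: "\<forall>x\<in>P. \<forall>i. wv i \<bullet> f x + bv i = 0 \<longrightarrow> wv i \<bullet> (\<chi> k. p k \<bullet> f x + q k) = 0"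
  shows "\<forall>x\<in>P. (\<chi> k. p k \<bullet> f x + q k) = (0::real^'n)"
proof -
  define Dy where "Dy y = (\<chi> k. p k \<bullet> y + q k)" for y :: "real^'n"
  define Lh where "Lh z = (\<chi> k. p k \<bullet> h z)" for z
  define e where "e = (\<chi> k. p k \<bullet> c + q k)"
  have Lhl: "linear Lh"
    by (rule linearI) (simp_all add: Lh_def vec_eq_iff linear_add[OF hl] linear_cmul[OF hl] inner_add_right)
  have DA: "Dy (f x) = Lh x + e" if "x \<in> P" for x
  proof -
    have fx: "f x = h x + c" using fA that by simp
    show ?thesis unfolding Dy_def Lh_def e_def fx by (simp add: vec_eq_iff inner_add_right)
  qed
  have fH: "f \<in> Hom P std_simplex" using fv by (simp add: vert_def)
  have fS: "\<forall>x\<in>P. \<forall>i. 0 \<le> wv i \<bullet> f x + bv i" using fH by (auto simp: Hom_def simplex_char)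
  have f0: "\<forall>x. x \<notin> P \<longrightarrow> f x = 0" using fH by (auto simp: Hom_def)
  have VP: "V \<subseteq> P" using PV by (simp add: hull_subset)
  define E where "E = (\<lambda>(v,i). (wv i \<bullet> f v + bv i) / (\<bar>wv i \<bullet> Dy (f v)\<bar> + 1)) ` {(v,i). v\<in>V \<and> 0 < wv i \<bullet> f v + bv i}"
  have fE: "finite E"
  proof -
    have "{(v,i). v\<in>V \<and> 0 < wv i \<bullet> f v + bv i} \<subseteq> V \<times> UNIV" by auto
    then have "finite {(v,i). v\<in>V \<and> 0 < wv i \<bullet> f v + bv i}"
      using PV(2) by (meson finite_SigmaI finite finite_subset)
    then show ?thesis by (simp add: E_def)
  qed
  define \<epsilon> where "\<epsilon> = Min (insert 1 E)"
  have Epos: "\<forall>z\<in>E. 0 < z" by (auto simp: E_def)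
  have epos: "0 < \<epsilon>" unfolding \<epsilon>_def using fE Epos by (subst Min_gr_iff) auto
  have key: "0 \<le> wv i \<bullet> (f v + t *\<^sub>R Dy (f v)) + bv i" if "\<bar>t\<bar> \<le> \<epsilon>" "v \<in> V" for t v i
  proof -
    define a where "a = wv i \<bullet> f v + bv i"
    define d where "d = wv i \<bullet> Dy (f v)"
    have val: "wv i \<bullet> (f v + t *\<^sub>R Dy (f v)) + bv i = a + t * d"
      by (simp add: a_def d_def inner_add_right algebra_simps)
    have a0: "0 \<le> a" using fS VP that by (auto simp: a_def)
    show ?thesis
    proof (cases "a = 0")
      case True
      then have "d = 0" using cond VP that by (auto simp: a_def d_def Dy_def)
      then show ?thesis using val True by simp
    next
      case False
      then have ap: "0 < a" using a0 by simp
      have "a / (\<bar>d\<bar> + 1) \<in> E" unfolding E_def a_def d_def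
        using that(2) ap[unfolded a_def] by (auto intro!: image_eqI[where x="(v,i)"])
      then have "\<epsilon> \<le> a / (\<bar>d\<bar> + 1)" unfolding \<epsilon>_def using fE by (intro Min_le) auto
      then have "\<bar>t\<bar> \<le> a / (\<bar>d\<bar> + 1)" using that(1) by linarith
      then have "\<bar>t\<bar> * \<bar>d\<bar> \<le> a / (\<bar>d\<bar> + 1) * \<bar>d\<bar>" by (rule mult_right_mono) simp_all
      also have "\<dots> \<le> a" using ap by (simp add: divide_simps)
      finally have "\<bar>t * d\<bar> \<le> a" by (simp add: abs_mult)
      then show ?thesis using val by linarith
    qed
  qed
  define g where "g t x = (if x\<in>P then h x + c + t *\<^sub>R (Lh x + e) else 0)" for t x
  have gH: "g t \<in> Hom P std_simplex" if "\<bar>t\<bar> \<le> \<epsilon>" for t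
  proof -
    have "0 \<le> wv i \<bullet> (h x + c + t *\<^sub>R (Lh x + e)) + bv i" if "x \<in> P" for x i
    proof -
      let ?C = "{x. 0 \<le> wv i \<bullet> (h x + c + t *\<^sub>R (Lh x + e)) + bv i}"
      have "V \<subseteq> ?C"
      proof
        fix v assume "v \<in> V"
        then show "v \<in> ?C" using key[OF \<open>\<bar>t\<bar> \<le> \<epsilon>\<close> \<open>v\<in>V\<close>, of i] DA[of v] fA VP by auto
      qed
      moreover have "convex ?C"
        unfolding convex_def
      proof (intro allI impI ballI)
        fix x y :: 'a and u v :: real
        assume xy: "x \<in> ?C" "y \<in> ?C" and uv: "0 \<le> u" "0 \<le> v" "u + v = 1"
        have cc: "c = u *\<^sub>R c + v *\<^sub>R c" "e = u *\<^sub>R e + v *\<^sub>R e"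
          using uv(3) by (metis scaleR_left_distrib scaleR_one)+
        have "h (u *\<^sub>R x + v *\<^sub>R y) + c + t *\<^sub>R (Lh (u *\<^sub>R x + v *\<^sub>R y) + e)
           = u *\<^sub>R (h x + c + t *\<^sub>R (Lh x + e)) + v *\<^sub>R (h y + c + t *\<^sub>R (Lh y + e))"
          apply (simp add: linear_add[OF hl] linear_cmul[OF hl] linear_add[OF Lhl] linear_cmul[OF Lhl])
          apply (subst cc(1), subst cc(2))
          by (simp add: algebra_simps)
        then show "u *\<^sub>R x + v *\<^sub>R y \<in> ?C"
          using xy uv by (simp add: bary_comb)
      qed
      ultimately have "P \<subseteq> ?C" using PV(1) by (simp add: hull_minimal)
      then show ?thesis using that by auto
    qed
    moreover have "linear (\<lambda>x. h x + t *\<^sub>R Lh x)"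
      by (rule linearI) (simp_all add: linear_add[OF hl] linear_cmul[OF hl] linear_add[OF Lhl] linear_cmul[OF Lhl] algebra_simps)
    moreover have "\<forall>x\<in>P. g t x = (h x + t *\<^sub>R Lh x) + (c + t *\<^sub>R e)"
      by (simp add: g_def algebra_simps)
    ultimately show ?thesis unfolding Hom_def simplex_char g_def by auto
  qed
  have fg: "f = (\<lambda>x. (1/2) *\<^sub>R g \<epsilon> x + (1 - 1/2) *\<^sub>R g (-\<epsilon>) x)"
  proof
    fix x show "f x = (1/2) *\<^sub>R g \<epsilon> x + (1 - 1/2) *\<^sub>R g (-\<epsilon>) x"
      using fA f0 half_aux[of "h x + c" \<epsilon> "Lh x + e"] by (cases "x \<in> P") (auto simp: g_def)
  qed
  have V: "\<forall>g'\<in>Hom P std_simplex. \<forall>h'\<in>Hom P std_simplex. \<forall>u::real. 0 < u \<and> u < 1 \<and> f = (\<lambda>x. u *\<^sub>R g' x + (1 - u) *\<^sub>R h' x) \<longrightarrow> g' = h'"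
    using fv by (simp add: vert_def)
  have h1: "g \<epsilon> \<in> Hom P std_simplex" "g (-\<epsilon>) \<in> Hom P std_simplex" using gH epos by auto
  have "g \<epsilon> = g (-\<epsilon>)"
    using V[rule_format, OF h1, of "1/2"] fg by simp
  show ?thesis
  proof
    fix x assume x: "x \<in> P"
    have "g \<epsilon> x = g (-\<epsilon>) x" using \<open>g \<epsilon> = g (-\<epsilon>)\<close> by simp
    then have "(h x + c) + \<epsilon> *\<^sub>R (Lh x + e) = (h x + c) + (-\<epsilon>) *\<^sub>R (Lh x + e)" using x by (simp add: g_def)
    then have "Lh x + e = 0" using epos by (rule cancel_aux)
    then show "(\<chi> k. p k \<bullet> f x + q k) = 0" using DA[OF x] by (simp add: Dy_def)
  qed
qed

lemma phi_id: "w \<bullet> y + b = (\<Sum>k\<in>UNIV. (w \<bullet> vtx (Some k) + b) * y$k) + b * (wv None \<bullet> y + bv None)"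
  for w y :: "real^'n::finite"
proof -
  have a: "w \<bullet> vtx (Some k) = w$k" for k by (simp add: inner_axis)
  have b: "w \<bullet> y = (\<Sum>k\<in>UNIV. w$k * y$k)" by (simp add: inner_vec_def)
  show ?thesis unfolding a b wv_None
    by (simp add: distrib_right sum.distrib sum_distrib_left[symmetric] algebra_simps)
qed

lemma sum_if_one: "(\<Sum>k\<in>UNIV. if k = k0 then A k else B k) = (\<Sum>k\<in>UNIV. B k) + (A k0 - B k0)"
  for A B :: "'n::finite \<Rightarrow> real"
proof -
  have "(\<Sum>k\<in>UNIV. if k = k0 then A k else B k) = (\<Sum>k\<in>UNIV. B k + (if k = k0 then A k - B k else 0))"
    by (rule sum.cong) auto
  also have "\<dots> = (\<Sum>k\<in>UNIV. B k) + (A k0 - B k0)" by (simp add: sum.distrib sum.delta)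
  finally show ?thesis .
qed

lemma wrap:
  fixes f :: "'a::euclidean_space \<Rightarrow> real^'n::finite" and h :: "'a \<Rightarrow> real^'n"
  assumes fv: "f \<in> vert P std_simplex" and hl: "linear h" and fA: "\<forall>x\<in>P. f x = h x + c"
  and PV: "P = convex hull V" "finite V"
  and hyp: "\<forall>x\<in>P. wv j \<bullet> f x + bv j = 0 \<longrightarrow> w \<bullet> f x + b = 0"
  and ij: "i \<noteq> j" and ci: "w \<bullet> vtx i + b \<noteq> 0" and x0: "x0 \<in> P" "wv i \<bullet> f x0 + bv i \<noteq> 0"
  shows False
proof -
  define cc where "cc l = w \<bullet> vtx l + b" for l
  define p where "p k = (if Some k = j then -(w - cc j *\<^sub>R wv j) else cc (Some k) *\<^sub>R axis k 1)" for k
  define q where "q k = (if Some k = j then -(b - cc j * bv j) else 0)" for k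
  define Dy where "Dy y = (\<chi> k. p k \<bullet> y + q k)" for y :: "real^'n"
  have comp: "Dy y $ k = (if Some k = j then -(w \<bullet> y + b - cc j * (wv j \<bullet> y + bv j)) else cc (Some k) * y$k)" for y k
    by (simp add: Dy_def p_def q_def inner_diff_left inner_axis' algebra_simps)
  have sumD: "(\<Sum>k\<in>UNIV. Dy y $ k) = (if j = None then w \<bullet> y + b - cc None * (wv None \<bullet> y + bv None) else - cc None * (wv None \<bullet> y + bv None))" for y
  proof (cases j)
    case None
    then show ?thesis using phi_id[of w y b] by (simp add: comp cc_def)
  next
    case (Some k0)
    have "(\<Sum>k\<in>UNIV. Dy y $ k) = (\<Sum>k\<in>UNIV. if k = k0 then -(w \<bullet> y + b - cc j * (wv j \<bullet> y + bv j)) else cc (Some k) * y$k)"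
      by (rule sum.cong) (auto simp: comp Some)
    also have "\<dots> = (\<Sum>k\<in>UNIV. cc (Some k) * y$k) - (w \<bullet> y + b)"
      by (subst sum_if_one) (simp add: Some wv_Some cc_def)
    finally show ?thesis using phi_id[of w y b] Some by (simp add: cc_def)
  qed
  have wvD: "wv l \<bullet> Dy y = (case l of None \<Rightarrow> -(\<Sum>k\<in>UNIV. Dy y $ k) | Some k \<Rightarrow> Dy y $ k)" for l y
    by (cases l) (simp_all add: wv_None wv_Some)
  have cond: "\<forall>x\<in>P. \<forall>l. wv l \<bullet> f x + bv l = 0 \<longrightarrow> wv l \<bullet> Dy (f x) = 0"
  proof (intro ballI allI impI)
    fix x l assume x: "x \<in> P" and l0: "wv l \<bullet> f x + bv l = 0"
    show "wv l \<bullet> Dy (f x) = 0"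
    proof (cases l)
      case None
      show ?thesis
      proof (cases j)
        case None2: None
        then show ?thesis using sumD[of "f x"] None l0 hyp x by (simp add: wvD)
      next
        case (Some k0)
        then show ?thesis using sumD[of "f x"] None l0 by (simp add: wvD)
      qed
    next
      case (Some k)
      then show ?thesis using l0 hyp x by (auto simp: wvD comp wv_Some)
    qed
  qed
  have "\<forall>x\<in>P. Dy (f x) = 0"
    using perturb[OF fv hl fA PV, of p q] cond unfolding Dy_def by blast
  then have D0: "Dy (f x0) = 0" using x0 by blast
  show False
  proof (cases i)
    case None
    then obtain k0 where j: "j = Some k0" using ij by (cases j) auto
    have "wv None \<bullet> Dy (f x0) = cc None * (wv None \<bullet> f x0 + bv None)"
      using sumD[of "f x0"] by (simp add: wvD j)
    then show False using D0 ci x0 None by (simp add: cc_def)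
  next
    case (Some k)
    have "Dy (f x0) $ k = cc (Some k) * f x0 $ k" using ij Some by (simp add: comp)
    then show False using D0 ci x0 Some by (simp add: cc_def wv_Some)
  qed
qed



theorem lemma3p3:
  fixes P :: "'a::euclidean_space set" and f :: "'a \<Rightarrow> real ^ 'n"
  assumes "polytope P" and "P \<noteq> {}"
    and "f \<in> vert P (std_simplex :: (real ^ 'n) set)"
  shows "\<exists>G. G face_of (std_simplex :: (real ^ 'n) set) \<and>
             aff_dim (f ` P) = aff_dim G \<and> f ` P \<subseteq> G \<and>
             (\<forall>F. F facet_of G \<longrightarrow> (\<exists>E. E facet_of (f ` P) \<and> E \<subseteq> F))"
proof -
  note fv = assms(3)
  have fH: "f \<in> Hom P std_simplex" using fv by (simp add: vert_def)
  then obtain h c where hl: "linear h" and fA: "\<forall>x\<in>P. f x = h x + c"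
    by (auto simp: Hom_def)
  have fS: "\<forall>x\<in>P. \<forall>i. 0 \<le> wv i \<bullet> f x + bv i" using fH by (auto simp: Hom_def simplex_char)
  obtain V where PV: "finite V" "P = convex hull V" using assms(1) by (auto simp: polytope_def)
  define Q where "Q = f ` P"
  define S where "S = {i. \<exists>x\<in>P. wv i \<bullet> f x + bv i \<noteq> 0}"
  define G where "G = convex hull (vtx ` S)"
  have fin: "finite S" by simp
  have QG: "Q \<subseteq> G"
  proof
    fix y assume "y \<in> Q"
    then obtain x where x: "x \<in> P" "y = f x" by (auto simp: Q_def)
    show "y \<in> G" unfolding G_def using x fS by (intro in_hull) (auto simp: S_def)
  qed
  have Gface: "G face_of std_simplex"
  proof -
    have e: "(std_simplex :: (real^'n) set) = convex hull (range vtx)"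
      unfolding std_simplex_def vtx_range ..
    have "vtx ` S \<subseteq> range vtx" by auto
    then have "convex hull (vtx ` S) face_of convex hull (range vtx :: (real^'n) set)"
      using face_of_convex_hull_affine_independent[OF vtx_indep[of UNIV]] by blast
    then show ?thesis unfolding G_def e .
  qed
  have dG: "aff_dim G = int (card S) - 1" by (simp add: G_def aff_dim_vtx aff_dim_convex_hull)
  have Qeq: "Q = (+) c ` (h ` P)" unfolding Q_def image_image using fA by (simp add: add.commute cong: image_cong)
  have convQ: "convex Q" unfolding Qeq
    using PV(2) hl by (intro convex_translation convex_linear_image) (auto simp: convex_convex_hull)
  have dQ: "aff_dim Q = int (card S) - 1"
  proof (rule ccontr)
    assume ne: "aff_dim Q \<noteq> int (card S) - 1"
    have "aff_dim Q \<le> aff_dim G" using QG by (rule aff_dim_subset)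
    then have lt: "aff_dim Q < int (card S) - 1" using ne dG by simp
    have "\<exists>i\<in>S. vtx i \<notin> affine hull Q"
    proof (rule ccontr)
      assume "\<not> ?thesis"
      then have "vtx ` S \<subseteq> affine hull Q" by auto
      then have "aff_dim (vtx ` S) \<le> aff_dim (affine hull Q)" by (rule aff_dim_subset)
      then show False using lt by (simp add: aff_dim_vtx)
    qed
    then obtain i where i: "i \<in> S" "vtx i \<notin> affine hull Q" by blast
    obtain w b where wb: "\<forall>y\<in>Q. w \<bullet> y + b = 0" "w \<bullet> vtx i + b \<noteq> 0" using sep[OF i(2)] by blast
    define j :: "'n option" where "j = (if i = None then Some undefined else None)"
    have ij: "i \<noteq> j" by (simp add: j_def)
    obtain x0 where x0: "x0 \<in> P" "wv i \<bullet> f x0 + bv i \<noteq> 0" using i(1) by (auto simp: S_def)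
    show False
      by (rule wrap[OF fv hl fA PV(2,1) _ ij wb(2) x0]) (use wb(1) in \<open>auto simp: Q_def\<close>)
  qed
  have facets: "\<exists>E. E facet_of Q \<and> E \<subseteq> F" if F: "F facet_of G" for F
  proof -
    obtain u where u: "u \<in> vtx ` S" "F = convex hull (vtx ` S - {u})" "F \<noteq> {}"
      using F unfolding G_def facet_of_convex_hull_affine_independent[OF vtx_indep] by blast
    then obtain j where j: "j \<in> S" "u = vtx j" by blast
    have Fj: "F = convex hull (vtx ` (S - {j}))"
      using u(2) j image_set_diff[OF inj_vtx, of S "{j}"] by simp
    have Sj: "S - {j} \<noteq> {}" using u(3) Fj by auto
    define Z where "Z = Q \<inter> {y. wv j \<bullet> y = - bv j}"
    have Zface: "Z face_of Q" unfolding Z_def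
    proof (rule face_of_Int_supporting_hyperplane_ge[OF convQ])
      fix y assume "y \<in> Q"
      then obtain x where "x \<in> P" "y = f x" by (auto simp: Q_def)
      then have "0 \<le> wv j \<bullet> y + bv j" using fS by simp
      then show "- bv j \<le> wv j \<bullet> y" by linarith
    qed
    have ZF: "Z \<subseteq> F"
    proof
      fix y assume "y \<in> Z"
      then obtain x where x: "x \<in> P" "y = f x" "wv j \<bullet> y + bv j = 0" by (auto simp: Z_def Q_def)
      show "y \<in> F" unfolding Fj using x fS by (intro in_hull) (auto simp: S_def)
    qed
    obtain x0 where x0: "x0 \<in> P" "wv j \<bullet> f x0 + bv j \<noteq> 0" using j(1) by (auto simp: S_def)
    have "f x0 \<notin> Z" using x0 by (auto simp: Z_def)
    then have "Z \<noteq> Q" using x0 by (auto simp: Q_def)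
    then have Zlt: "aff_dim Z < aff_dim Q" by (rule face_of_aff_dim_lt[OF convQ Zface])
    have cS: "card (S - {j}) = card S - 1" using j(1) by simp
    have "card (S - {j}) > 0" using Sj by (simp add: card_gt_0_iff)
    then have cS1: "card S \<ge> 2" using cS by linarith
    have Zge: "aff_dim Z \<ge> int (card (S - {j})) - 1"
    proof (rule ccontr)
      assume "\<not> ?thesis"
      then have lt: "aff_dim Z < int (card (S - {j})) - 1" by simp
      have "\<exists>i\<in>S - {j}. vtx i \<notin> affine hull Z"
      proof (rule ccontr)
        assume "\<not> ?thesis"
        then have "vtx ` (S - {j}) \<subseteq> affine hull Z" by auto
        then have "aff_dim (vtx ` (S - {j})) \<le> aff_dim (affine hull Z)" by (rule aff_dim_subset)
        then show False using lt by (simp add: aff_dim_vtx)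
      qed
      then obtain i where i: "i \<in> S" "i \<noteq> j" "vtx i \<notin> affine hull Z" by blast
      obtain w b where wb: "\<forall>y\<in>Z. w \<bullet> y + b = 0" "w \<bullet> vtx i + b \<noteq> 0" using sep[OF i(3)] by blast
      obtain x1 where x1: "x1 \<in> P" "wv i \<bullet> f x1 + bv i \<noteq> 0" using i(1) by (auto simp: S_def)
      show False
      proof (rule wrap[OF fv hl fA PV(2,1) _ i(2) wb(2) x1])
        show "\<forall>x\<in>P. wv j \<bullet> f x + bv j = 0 \<longrightarrow> w \<bullet> f x + b = 0"
          using wb(1) by (auto simp: Z_def Q_def eq_neg_iff_add_eq_0)
      qed
    qed
    have dZ: "aff_dim Z = aff_dim Q - 1" using Zlt Zge dQ cS cS1 by linarith
    have "Z \<noteq> {}"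
    proof
      assume "Z = {}"
      then show False using Zge cS cS1 by simp
    qed
    then have "Z facet_of Q" using Zface dZ by (simp add: facet_of_def)
    then show ?thesis using ZF by blast
  qed
  show ?thesis
    using Gface dG dQ QG facets unfolding Q_def by (intro exI[of _ G]) auto
qed

end
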